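(* Let $(z_k)_{k\in\mathbb{N}}$ and $(z'_k)_{k\in\mathbb{N}}$ be sequences of pairwise distinct complex numbers with $\lim_{k\to\infty}|z_k|=\infty=\lim_{k\to\infty}|z'_k|$, and let $f,g$ be entire functions whose zeros are exactly the $z_k$ (respectively the $z'_k$), all simple. Let $S(f)=\{(z,w)\in\mathbb{C}^2: w^2=f(z)\}$, $S(g)=\{(z,w)\in\mathbb{C}^2: w^2=g(z)\}$, and let $G_f=\langle\varphi_f\rangle$, $G_g=\langle\varphi_g\rangle$ where $\varphi_f(z,w)=(z,-w)$ on $S(f)$ and $\varphi_g(z,w)=(z,-w)$ on $S(g)$. Then the pairs $(S(f),G_f)$ and $(S(g),G_g)$ are biholomorphically equivalent if and only if there exists a holomorphic automorphism of $\mathbb{C}$ carrying the set of zeros of $f$ onto the set of zeros of $g$.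
   Context: The pairs $(S(f),G_f)$ and $(S(g),G_g)$ are biholomorphically equivalent if there is a biholomorphism $\Phi:S(f)\to S(g)$ with $\Phi G_f\Phi^{-1}=G_g$. $S(f)$ and $S(g)$ are Riemann surfaces (infinite hyperelliptic curves), and the projection $(z,w)\mapsto z$ is a branched double cover onto $\mathbb{C}$ with deck group $G_f$ (resp. $G_g$). *)

theory Defs
  imports "HOL-Complex_Analysis.Complex_Analysis" "HOL-Library.FuncSet"
begin

definition hsurf :: "(complex \<Rightarrow> complex) \<Rightarrow> (complex \<times> complex) set" where
  "hsurf f = {(z, w). w ^ 2 = f z}"

definition deck_group :: "(complex \<Rightarrow> complex) \<Rightarrow> ((complex \<times> complex) \<Rightarrow> (complex \<times> complex)) set" where
  "deck_group f = {restrict id (hsurf f), restrict (\<lambda>(z, w). (z, - w)) (hsurf f)}"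

definition local_chart :: "(complex \<times> complex) set \<Rightarrow> complex \<times> complex \<Rightarrow> complex set
    \<Rightarrow> (complex \<Rightarrow> complex \<times> complex) \<Rightarrow> bool" where
  "local_chart S p V \<gamma> \<longleftrightarrow>
     open V \<and>
     (\<lambda>t. fst (\<gamma> t)) holomorphic_on V \<and> (\<lambda>t. snd (\<gamma> t)) holomorphic_on V \<and>
     (\<forall>t\<in>V. deriv (\<lambda>s. fst (\<gamma> s)) t \<noteq> 0 \<or> deriv (\<lambda>s. snd (\<gamma> s)) t \<noteq> 0) \<and>
     inj_on \<gamma> V \<and>
     continuous_on (\<gamma> ` V) (the_inv_into V \<gamma>) \<and>
     (\<exists>W. open W \<and> p \<in> W \<and> \<gamma> ` V = S \<inter> W)"

definition holo_map :: "(complex \<times> complex) set \<Rightarrow> ((complex \<times> complex) \<Rightarrow> (complex \<times> complex)) \<Rightarrow> bool" where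
  "holo_map S \<Phi> \<longleftrightarrow>
     (\<forall>p\<in>S. \<exists>V \<gamma>. local_chart S p V \<gamma> \<and>
        (\<lambda>t. fst (\<Phi> (\<gamma> t))) holomorphic_on V \<and> (\<lambda>t. snd (\<Phi> (\<gamma> t))) holomorphic_on V)"

definition biholomorphism :: "(complex \<times> complex) set \<Rightarrow> (complex \<times> complex) set
    \<Rightarrow> ((complex \<times> complex) \<Rightarrow> (complex \<times> complex)) \<Rightarrow> bool" where
  "biholomorphism S T \<Phi> \<longleftrightarrow>
     bij_betw \<Phi> S T \<and> holo_map S \<Phi> \<and> holo_map T (the_inv_into S \<Phi>)"

definition biholo_equiv_pairs :: "(complex \<Rightarrow> complex) \<Rightarrow> (complex \<Rightarrow> complex) \<Rightarrow> bool" where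
  "biholo_equiv_pairs f g \<longleftrightarrow>
     (\<exists>\<Phi>. biholomorphism (hsurf f) (hsurf g) \<Phi> \<and>
        {restrict (\<Phi> \<circ> h \<circ> the_inv_into (hsurf f) \<Phi>) (hsurf g) | h. h \<in> deck_group f}
          = deck_group g)"

end

theory Submission
  imports Defs
begin

lemma chart_regular:
  fixes F :: "complex \<Rightarrow> complex"
  assumes holF: "F holomorphic_on UNIV" and z0w0: "w0 ^ 2 = F z0" and nz: "w0 \<noteq> 0"
  shows "\<exists>V \<gamma>. local_chart (hsurf F) (z0, w0) V \<gamma>"
proof -
  have contF: "continuous_on UNIV F" using holF holomorphic_on_imp_continuous_on by blast
  have "F z0 \<noteq> 0" using z0w0 nz by auto
  then obtain e where e: "e > 0" "\<And>z. z \<in> ball z0 e \<Longrightarrow> F z \<noteq> 0"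
  proof -
    have "open {z. F z \<noteq> 0}" using contF by (intro open_Collect_neq) (auto intro: continuous_intros)
    then obtain e where "e > 0" "ball z0 e \<subseteq> {z. F z \<noteq> 0}"
      using \<open>F z0 \<noteq> 0\<close> openE by blast
    then show ?thesis using that by blast
  qed
  obtain s0 where s0: "s0 holomorphic_on ball z0 e" "\<And>z. z \<in> ball z0 e \<Longrightarrow> F z = s0 z ^ 2"
    using contractible_imp_holomorphic_sqrt[of F "ball z0 e"] e holomorphic_on_subset[OF holF]
      convex_imp_contractible[OF convex_ball] by blast
  have "s0 z0 ^ 2 = w0 ^ 2" using s0(2)[of z0] e z0w0 by simp
  then have "s0 z0 = w0 \<or> s0 z0 = - w0" by (simp add: power2_eq_iff)
  then obtain s where s: "s holomorphic_on ball z0 e" "\<And>z. z \<in> ball z0 e \<Longrightarrow> F z = s z ^ 2" "s z0 = w0"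
  proof
    assume "s0 z0 = w0" then show ?thesis using that s0 by blast
  next
    assume "s0 z0 = - w0" then show ?thesis using that[of "\<lambda>z. - s0 z"] s0
      by (auto intro: holomorphic_intros)
  qed
  define V where "V = ball z0 e"
  define \<gamma> where "\<gamma> = (\<lambda>t. (t, s t))"
  define W where "W = (ball z0 e \<times> UNIV) \<inter> (\<lambda>q. norm (snd q - s (fst q)) - norm (s (fst q))) -` {..<0}"
  have conts: "continuous_on (ball z0 e) s" using s(1) holomorphic_on_imp_continuous_on by blast
  have "continuous_on (ball z0 e \<times> UNIV) (\<lambda>q. norm (snd q - s (fst q)) - norm (s (fst q)))"
  proof -
    have c1: "continuous_on (ball z0 e \<times> UNIV) (\<lambda>q. s (fst q))"
      by (rule continuous_on_compose2[OF conts continuous_on_fst]) auto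
    show ?thesis
      by (rule continuous_on_diff[OF continuous_on_norm[OF continuous_on_diff[OF continuous_on_snd[OF continuous_on_id] c1]] continuous_on_norm[OF c1]])
  qed
  then have oW: "open W" unfolding W_def
    by (intro continuous_open_preimage) (auto simp: open_Times)
  have "local_chart (hsurf F) (z0, w0) V \<gamma>"
    unfolding local_chart_def
  proof (intro conjI)
    show "open V" by (simp add: V_def)
    show "(\<lambda>t. fst (\<gamma> t)) holomorphic_on V" by (simp add: \<gamma>_def holomorphic_intros)
    show "(\<lambda>t. snd (\<gamma> t)) holomorphic_on V" using s by (simp add: \<gamma>_def V_def)
    show "\<forall>t\<in>V. deriv (\<lambda>s. fst (\<gamma> s)) t \<noteq> 0 \<or> deriv (\<lambda>s. snd (\<gamma> s)) t \<noteq> 0"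
      by (simp add: \<gamma>_def)
    show inj: "inj_on \<gamma> V" by (auto simp: \<gamma>_def inj_on_def)
    have cfst: "continuous_on (\<gamma> ` V) fst" by (intro continuous_intros)
    moreover have "the_inv_into V \<gamma> q = fst q" if qV: "q \<in> \<gamma> ` V" for q
    proof -
      obtain t where "t \<in> V" "q = \<gamma> t" using qV by blast
      then show ?thesis using the_inv_into_f_f[OF inj] by (simp add: \<gamma>_def)
    qed
    ultimately show "continuous_on (\<gamma> ` V) (the_inv_into V \<gamma>)"
      by (intro continuous_on_eq[OF cfst]) auto
    show "\<exists>W. open W \<and> (z0, w0) \<in> W \<and> \<gamma> ` V = hsurf F \<inter> W"
    proof (intro exI conjI)
      show "open W" by fact
      show "(z0, w0) \<in> W" using e s nz by (auto simp: W_def)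
      show "\<gamma> ` V = hsurf F \<inter> W"
      proof
        show "\<gamma> ` V \<subseteq> hsurf F \<inter> W"
          using s e by (force simp: \<gamma>_def V_def W_def hsurf_def)
        show "hsurf F \<inter> W \<subseteq> \<gamma> ` V"
        proof
          fix q assume q: "q \<in> hsurf F \<inter> W"
          obtain z w where qzw: "q = (z, w)" by fastforce
          have zb: "z \<in> ball z0 e" and lt: "norm (w - s z) < norm (s z)" and ww: "w ^ 2 = F z"
            using q by (auto simp: qzw W_def hsurf_def)
          have "w ^ 2 = s z ^ 2" using ww s(2)[OF zb] by simp
          then have "w = s z \<or> w = - s z" by (simp add: power2_eq_iff)
          moreover have "w \<noteq> - s z"
          proof
            assume "w = - s z"
            then have e2: "w - s z = (-2) * s z" by (simp add: algebra_simps)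
            have "norm (w - s z) = norm ((-2::complex)) * norm (s z)" by (simp only: e2 norm_mult)
            then have "norm (w - s z) = 2 * norm (s z)" by simp
            then show False using lt by simp
          qed
          ultimately have "w = s z" by blast
          then show "q \<in> \<gamma> ` V" using zb by (auto simp: qzw \<gamma>_def V_def)
        qed
      qed
    qed
  qed
  then show ?thesis by blast
qed

lemma chart_branch:
  fixes F :: "complex \<Rightarrow> complex"
  assumes holF: "F holomorphic_on UNIV" and F0: "F z0 = 0" and dF: "deriv F z0 \<noteq> 0"
  shows "\<exists>V \<gamma>. local_chart (hsurf F) (z0, 0) V \<gamma>"
proof -
  obtain r where r: "r > 0" "inj_on F (ball z0 r)"
    using has_complex_derivative_locally_injective[OF holF _ open_UNIV dF] by blast
  define U where "U = ball z0 r"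
  have holU: "F holomorphic_on U" using holF holomorphic_on_subset by blast
  have oO: "open (F ` U)" using open_mapping_thm3[OF holU _ r(2)[folded U_def]] by (simp add: U_def)
  obtain \<phi> where \<phi>: "\<phi> holomorphic_on (F ` U)" "\<And>z. z \<in> U \<Longrightarrow> \<phi> (F z) = z"
    using holomorphic_has_inverse[OF holU _ r(2)[folded U_def]] by (metis U_def open_ball)
  define V where "V = (\<lambda>t. t ^ 2) -` (F ` U)"
  define \<gamma> where "\<gamma> = (\<lambda>t::complex. (\<phi> (t ^ 2), t))"
  have oV: "open V" unfolding V_def
    by (rule open_vimage[OF oO]) (intro continuous_intros)
  have "local_chart (hsurf F) (z0, 0) V \<gamma>"
    unfolding local_chart_def
  proof (intro conjI)
    show "open V" by fact
    have "(\<phi> \<circ> (\<lambda>t. t ^ 2)) holomorphic_on V"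
      by (rule holomorphic_on_compose_gen[OF _ \<phi>(1)]) (auto simp: V_def intro: holomorphic_intros)
    then show "(\<lambda>t. fst (\<gamma> t)) holomorphic_on V" by (simp add: \<gamma>_def o_def)
    show "(\<lambda>t. snd (\<gamma> t)) holomorphic_on V" by (simp add: \<gamma>_def holomorphic_intros)
    show "\<forall>t\<in>V. deriv (\<lambda>s. fst (\<gamma> s)) t \<noteq> 0 \<or> deriv (\<lambda>s. snd (\<gamma> s)) t \<noteq> 0"
      by (simp add: \<gamma>_def)
    show inj: "inj_on \<gamma> V" by (auto simp: \<gamma>_def inj_on_def)
    have csnd: "continuous_on (\<gamma> ` V) snd" by (intro continuous_intros)
    moreover have "the_inv_into V \<gamma> q = snd q" if qV: "q \<in> \<gamma> ` V" for q
    proof -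
      obtain t where "t \<in> V" "q = \<gamma> t" using qV by blast
      then show ?thesis using the_inv_into_f_f[OF inj] by (simp add: \<gamma>_def)
    qed
    ultimately show "continuous_on (\<gamma> ` V) (the_inv_into V \<gamma>)"
      by (intro continuous_on_eq[OF csnd]) auto
    show "\<exists>W. open W \<and> (z0, 0) \<in> W \<and> \<gamma> ` V = hsurf F \<inter> W"
    proof (intro exI conjI)
      show "open (U \<times> (UNIV :: complex set))" by (simp add: U_def open_Times)
      show "(z0, 0) \<in> U \<times> (UNIV :: complex set)" using r by (simp add: U_def)
      show "\<gamma> ` V = hsurf F \<inter> (U \<times> UNIV)"
      proof
        show "\<gamma> ` V \<subseteq> hsurf F \<inter> (U \<times> UNIV)"
        proof
          fix q assume "q \<in> \<gamma> ` V"
          then obtain t where t: "t \<in> V" "q = \<gamma> t" by blast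
          then obtain u where u: "u \<in> U" "t ^ 2 = F u" by (auto simp: V_def)
          then have "\<phi> (t ^ 2) = u" using \<phi>(2) by simp
          then show "q \<in> hsurf F \<inter> (U \<times> UNIV)" using t u by (simp add: \<gamma>_def hsurf_def)
        qed
        show "hsurf F \<inter> (U \<times> UNIV) \<subseteq> \<gamma> ` V"
        proof
          fix q assume q: "q \<in> hsurf F \<inter> (U \<times> UNIV)"
          obtain z w where qzw: "q = (z, w)" by fastforce
          have zU: "z \<in> U" and ww: "w ^ 2 = F z" using q by (auto simp: qzw hsurf_def)
          have "w \<in> V" using zU ww by (auto simp: V_def)
          moreover have "\<phi> (w ^ 2) = z" using ww \<phi>(2)[OF zU] by simp
          ultimately show "q \<in> \<gamma> ` V" by (auto simp: qzw \<gamma>_def intro!: image_eqI[of _ _ w])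
        qed
      qed
    qed
  qed
  then show ?thesis by blast
qed

lemma chart_exists:
  fixes F :: "complex \<Rightarrow> complex"
  assumes holF: "F holomorphic_on UNIV" and simple: "\<And>x. F x = 0 \<Longrightarrow> deriv F x \<noteq> 0"
    and p: "p \<in> hsurf F"
  shows "\<exists>V \<gamma>. local_chart (hsurf F) p V \<gamma>"
proof -
  obtain z0 w0 where pz: "p = (z0, w0)" and ww: "w0 ^ 2 = F z0" using p by (auto simp: hsurf_def)
  show ?thesis
  proof (cases "w0 = 0")
    case True
    then have "F z0 = 0" using ww by simp
    then show ?thesis using chart_branch[OF holF _ simple] True pz by blast
  next
    case False
    then show ?thesis using chart_regular[OF holF ww] pz by blast
  qed
qed

lemma chart_props:
  assumes "local_chart S p V \<gamma>" "p \<in> S"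
  shows "open V" "(\<lambda>t. fst (\<gamma> t)) holomorphic_on V" "(\<lambda>t. snd (\<gamma> t)) holomorphic_on V"
    "\<And>t. t \<in> V \<Longrightarrow> \<gamma> t \<in> S" "p \<in> \<gamma> ` V"
  using assms unfolding local_chart_def by (auto simp: hsurf_def)

lemma holo_map_affine:
  fixes F A B :: "complex \<Rightarrow> complex"
  assumes holF: "F holomorphic_on UNIV" and simple: "\<And>x. F x = 0 \<Longrightarrow> deriv F x \<noteq> 0"
    and holA: "A holomorphic_on UNIV" and holB: "B holomorphic_on UNIV"
    and eq: "\<And>q. q \<in> hsurf F \<Longrightarrow> \<Phi> q = (A (fst q), snd q * B (fst q))"
  shows "holo_map (hsurf F) \<Phi>"
  unfolding holo_map_def
proof
  fix p assume p: "p \<in> hsurf F"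
  obtain V \<gamma> where ch: "local_chart (hsurf F) p V \<gamma>" using chart_exists[OF holF simple p] by blast
  note cp = chart_props[OF ch p]
  have g1: "(\<lambda>t. A (fst (\<gamma> t))) holomorphic_on V"
    using holomorphic_on_compose_gen[OF cp(2) holA] by (simp add: o_def)
  have g2: "(\<lambda>t. snd (\<gamma> t) * B (fst (\<gamma> t))) holomorphic_on V"
    using holomorphic_on_compose_gen[OF cp(2) holB] cp(3) by (simp add: o_def holomorphic_intros)
  have "(\<lambda>t. fst (\<Phi> (\<gamma> t))) holomorphic_on V"
    by (rule holomorphic_transform[OF g1]) (simp add: eq cp(4))
  moreover have "(\<lambda>t. snd (\<Phi> (\<gamma> t))) holomorphic_on V"
    by (rule holomorphic_transform[OF g2]) (simp add: eq cp(4))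
  ultimately have "(\<lambda>t. fst (\<Phi> (\<gamma> t))) holomorphic_on V \<and> (\<lambda>t. snd (\<Phi> (\<gamma> t))) holomorphic_on V"
    by blast
  then show "\<exists>V \<gamma>. local_chart (hsurf F) p V \<gamma> \<and>
        (\<lambda>t. fst (\<Phi> (\<gamma> t))) holomorphic_on V \<and> (\<lambda>t. snd (\<Phi> (\<gamma> t))) holomorphic_on V"
    using ch by blast
qed

lemma holo_map_tendsto:
  assumes hm: "holo_map S \<Phi>" and p: "p \<in> S"
    and u: "(u \<longlongrightarrow> p) Fl" and ev: "eventually (\<lambda>x. u x \<in> S) Fl"
  shows "((\<lambda>x. \<Phi> (u x)) \<longlongrightarrow> \<Phi> p) Fl"
proof -
  obtain V \<gamma> where ch: "local_chart S p V \<gamma>" and h1: "(\<lambda>t. fst (\<Phi> (\<gamma> t))) holomorphic_on V"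
    and h2: "(\<lambda>t. snd (\<Phi> (\<gamma> t))) holomorphic_on V"
    using hm p unfolding holo_map_def by blast
  obtain W where W: "open W" "p \<in> W" "\<gamma> ` V = S \<inter> W"
    using ch unfolding local_chart_def by blast
  have inj: "inj_on \<gamma> V" and ci: "continuous_on (\<gamma> ` V) (the_inv_into V \<gamma>)"
    using ch unfolding local_chart_def by auto
  have c1: "continuous_on V (\<lambda>t. (fst (\<Phi> (\<gamma> t)), snd (\<Phi> (\<gamma> t))))"
    using h1 h2 by (intro continuous_on_Pair holomorphic_on_imp_continuous_on)
  have c1': "continuous_on V (\<lambda>t. \<Phi> (\<gamma> t))" using c1 by simp
  have "continuous_on (\<gamma> ` V) (\<lambda>q. \<Phi> (\<gamma> (the_inv_into V \<gamma> q)))"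
    by (rule continuous_on_compose2[OF c1' ci]) (auto simp: the_inv_into_f_f[OF inj])
  moreover have "\<Phi> (\<gamma> (the_inv_into V \<gamma> q)) = \<Phi> q" if "q \<in> \<gamma> ` V" for q
    using f_the_inv_into_f[OF inj that] by simp
  ultimately have cS: "continuous_on (S \<inter> W) \<Phi>"
    using W(3) continuous_on_eq by (metis (no_types, lifting))
  have "eventually (\<lambda>x. u x \<in> W) Fl" using topological_tendstoD[OF u W(1,2)] .
  with ev have "eventually (\<lambda>x. u x \<in> S \<inter> W) Fl" by (auto elim: eventually_elim2)
  then show ?thesis using continuous_on_tendsto_compose[OF cS u] p W(2) by blast
qed

lemma holo_UNIV_local:
  assumes "\<And>z. \<exists>S. open S \<and> z \<in> S \<and> q holomorphic_on S"
  shows "q holomorphic_on UNIV"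
  unfolding holomorphic_on_def
proof
  fix z :: complex
  obtain S where "open S" "z \<in> S" "q holomorphic_on S" using assms by blast
  then have "q field_differentiable at z" using holomorphic_on_imp_differentiable_at by blast
  then show "q field_differentiable at z within UNIV" by simp
qed

lemma simple_zero_isolated:
  fixes f :: "complex \<Rightarrow> complex"
  assumes holf: "f holomorphic_on UNIV" and "f z = 0" and "deriv f z \<noteq> 0"
  obtains r where "r > 0" "\<And>y. y \<in> ball z r \<Longrightarrow> y \<noteq> z \<Longrightarrow> f y \<noteq> 0"
proof -
  obtain r where r: "r > 0" "inj_on f (ball z r)"
    using has_complex_derivative_locally_injective[OF holf _ open_UNIV assms(3)] by blast
  have "f y \<noteq> 0" if "y \<in> ball z r" "y \<noteq> z" for y
    using r that assms(2) inj_onD[OF r(2), of y z] by auto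
  then show ?thesis using that r by blast
qed

lemma removable_quotient:
  fixes f G :: "complex \<Rightarrow> complex"
  assumes holf: "f holomorphic_on UNIV" and holG: "G holomorphic_on UNIV"
    and simple: "\<And>z. f z = 0 \<Longrightarrow> deriv f z \<noteq> 0"
    and G0: "\<And>z. f z = 0 \<Longrightarrow> G z = 0"
  shows "(\<lambda>z. if f z = 0 then deriv G z / deriv f z else G z / f z) holomorphic_on UNIV"
    (is "?q holomorphic_on UNIV")
proof (rule holo_UNIV_local)
  have contf: "continuous_on UNIV f" using holf holomorphic_on_imp_continuous_on by blast
  have oN: "open {z. f z \<noteq> 0}" using contf by (intro open_Collect_neq) (auto intro: continuous_intros)
  have hN: "?q holomorphic_on {z. f z \<noteq> 0}"
  proof (rule holomorphic_transform)
    show "(\<lambda>z. G z / f z) holomorphic_on {z. f z \<noteq> 0}"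
      using holf holG by (intro holomorphic_on_divide) (auto intro: holomorphic_on_subset)
  qed simp
  fix z
  show "\<exists>S. open S \<and> z \<in> S \<and> ?q holomorphic_on S"
  proof (cases "f z = 0")
    case False
    then show ?thesis using oN hN by blast
  next
    case True
    obtain r where r: "r > 0" "\<And>y. y \<in> ball z r \<Longrightarrow> y \<noteq> z \<Longrightarrow> f y \<noteq> 0"
      using simple_zero_isolated[OF holf True simple[OF True]] by blast
    have dG: "(G has_field_derivative deriv G z) (at z)" using holomorphic_derivI[OF holG open_UNIV] by blast
    have df: "(f has_field_derivative deriv f z) (at z)" using holomorphic_derivI[OF holf open_UNIV] by blast
    have "((\<lambda>y. ((G y - G z) / (y - z)) / ((f y - f z) / (y - z))) \<longlongrightarrow> deriv G z / deriv f z) (at z)"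
      using dG df simple[OF True] unfolding has_field_derivative_iff by (intro tendsto_divide) auto
    then have "(?q \<longlongrightarrow> deriv G z / deriv f z) (at z)"
    proof (rule Lim_transform_within_open[OF _ open_ball[of z r]])
      show "z \<in> ball z r" using r by simp
      fix y assume y: "y \<in> ball z r" "y \<noteq> z"
      then have "f y \<noteq> 0" using r by blast
      then show "((G y - G z) / (y - z)) / ((f y - f z) / (y - z)) = ?q y"
        using y True G0[OF True] by (simp add: field_simps)
    qed
    then have lim: "(?q \<longlongrightarrow> ?q z) (at z within ball z r)"
      using True by (auto intro: tendsto_within_subset)
    have "?q holomorphic_on ball z r"
    proof (rule no_isolated_singularity'[where K = "{z}"])
      show "?q holomorphic_on ball z r - {z}"
        by (rule holomorphic_on_subset[OF hN]) (use r in auto)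
    qed (use lim in auto)
    moreover have "open (ball z r)" "z \<in> ball z r" using r by auto
    ultimately show ?thesis by blast
  qed
qed

lemma backward:
  fixes f g h :: "complex \<Rightarrow> complex"
  assumes holf: "f holomorphic_on UNIV" and holg: "g holomorphic_on UNIV"
    and simf: "\<And>z. f z = 0 \<Longrightarrow> deriv f z \<noteq> 0"
    and simg: "\<And>z. g z = 0 \<Longrightarrow> deriv g z \<noteq> 0"
    and holh: "h holomorphic_on UNIV" and bh: "bij h" and holi: "inv h holomorphic_on UNIV"
    and hz: "h ` {x. f x = 0} = {x. g x = 0}"
  shows "biholo_equiv_pairs f g"
proof -
  have ih: "\<And>z. inv h (h z) = z" using bh by (simp add: bij_is_inj)
  have hi: "\<And>z. h (inv h z) = z" using bh by (simp add: bij_is_surj surj_f_inv_f)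
  have injh: "inj h" using bh bij_is_inj by blast
  have dh: "deriv h z \<noteq> 0" for z
  proof -
    have d1: "(h has_field_derivative deriv h z) (at z)" using holomorphic_derivI[OF holh open_UNIV] by blast
    have d2: "(inv h has_field_derivative deriv (inv h) (h z)) (at (h z))"
      using holomorphic_derivI[OF holi open_UNIV] by blast
    have "((\<lambda>x. inv h (h x)) has_field_derivative deriv (inv h) (h z) * deriv h z) (at z)"
      by (rule DERIV_chain2[OF d2 d1])
    then have "((\<lambda>x. x) has_field_derivative deriv (inv h) (h z) * deriv h z) (at z)"
      by (simp add: ih)
    then have "deriv (inv h) (h z) * deriv h z = 1" using DERIV_ident DERIV_unique by blast
    then show ?thesis by auto
  qed
  define G where "G = (\<lambda>z. g (h z))"
  have G0: "G z = 0 \<longleftrightarrow> f z = 0" for z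
  proof
    assume "G z = 0"
    then have "h z \<in> h ` {x. f x = 0}" using hz by (simp add: G_def)
    then show "f z = 0" using injh by (auto dest: injD)
  next
    assume "f z = 0"
    then show "G z = 0" using hz by (auto simp: G_def)
  qed
  have holG: "G holomorphic_on UNIV" unfolding G_def
    using holomorphic_on_compose_gen[OF holh holg] by (simp add: o_def)
  have dG: "deriv G z \<noteq> 0" if "f z = 0" for z
  proof -
    have d1: "(h has_field_derivative deriv h z) (at z)" using holomorphic_derivI[OF holh open_UNIV] by blast
    have d2: "(g has_field_derivative deriv g (h z)) (at (h z))"
      using holomorphic_derivI[OF holg open_UNIV] by blast
    have "(G has_field_derivative deriv g (h z) * deriv h z) (at z)"
      unfolding G_def by (rule DERIV_chain2[OF d2 d1])
    then have "deriv G z = deriv g (h z) * deriv h z" using DERIV_imp_deriv by blast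
    moreover have "g (h z) = 0" using G0[of z] that by (simp add: G_def)
    ultimately show ?thesis using simg dh by simp
  qed
  define q where "q = (\<lambda>z. if f z = 0 then deriv G z / deriv f z else G z / f z)"
  have G0': "G z = 0" if "f z = 0" for z using G0 that by blast
  have holq: "q holomorphic_on UNIV" unfolding q_def
    using removable_quotient[OF holf holG simf G0'] by blast
  have qnz: "q z \<noteq> 0" for z
  proof (cases "f z = 0")
    case True
    then show ?thesis using dG[OF True] simf[OF True] by (simp add: q_def)
  next
    case False
    then have "G z \<noteq> 0" using G0 by blast
    then show ?thesis using False by (simp add: q_def)
  qed
  have fq: "f z * q z = G z" for z
  proof (cases "f z = 0")
    case True
    then show ?thesis using G0'[OF True] by simp
  next
    case False
    then show ?thesis by (simp add: q_def)
  qed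
  have qnz': "\<And>z. z \<in> UNIV \<Longrightarrow> q z \<noteq> 0" using qnz by blast
  obtain r where holr: "r holomorphic_on UNIV" and qr0: "\<And>z. z \<in> UNIV \<Longrightarrow> q z = r z ^ 2"
  proof (rule contractible_imp_holomorphic_sqrt[OF holq contractible_UNIV qnz'])
    fix g assume "g holomorphic_on UNIV" "\<And>z. z \<in> UNIV \<Longrightarrow> q z = g z ^ 2"
    then show thesis by (rule that)
  qed
  have qr: "q z = r z ^ 2" for z using qr0 by blast
  have rnz: "r z \<noteq> 0" for z using qnz[of z] qr[of z] by auto
  define \<Phi> where "\<Phi> = (\<lambda>p. (h (fst p), snd p * r (fst p)))"
  define \<Psi> where "\<Psi> = (\<lambda>p. (inv h (fst p), snd p * (1 / r (inv h (fst p)))))"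
  define S where "S = hsurf f"
  define T where "T = hsurf g"
  have PhiS: "\<Phi> p \<in> T" if pS: "p \<in> S" for p
  proof -
    obtain z w where p: "p = (z, w)" "w ^ 2 = f z" using pS by (auto simp: S_def hsurf_def)
    have "(w * r z) ^ 2 = f z * q z" using p qr by (simp add: power_mult_distrib)
    also have "\<dots> = g (h z)" using fq by (simp add: G_def)
    finally show ?thesis by (simp add: T_def hsurf_def \<Phi>_def p)
  qed
  have PsiT: "\<Psi> p \<in> S" if pT: "p \<in> T" for p
  proof -
    obtain z w where p: "p = (z, w)" "w ^ 2 = g z" using pT by (auto simp: T_def hsurf_def)
    define y where "y = inv h z"
    have "g z = G y" by (simp add: G_def y_def hi)
    also have "\<dots> = f y * r y ^ 2" using fq qr by simp
    finally have "(w * (1 / r y)) ^ 2 = f y" using p rnz[of y] by (simp add: power_mult_distrib field_simps)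
    then show ?thesis by (simp add: S_def hsurf_def \<Psi>_def p y_def)
  qed
  have PsiPhi: "\<Psi> (\<Phi> p) = p" for p using rnz by (simp add: \<Psi>_def \<Phi>_def ih)
  have PhiPsi: "\<Phi> (\<Psi> p) = p" for p using rnz by (simp add: \<Psi>_def \<Phi>_def hi)
  have bij: "bij_betw \<Phi> S T"
    by (rule bij_betw_byWitness[where f' = \<Psi>]) (use PsiPhi PhiPsi PhiS PsiT in auto)
  have injS: "inj_on \<Phi> S" using bij bij_betw_imp_inj_on by blast
  have invPhi: "the_inv_into S \<Phi> p = \<Psi> p" if "p \<in> T" for p
    by (rule the_inv_into_f_eq[OF injS PhiPsi PsiT[OF that]])
  have PhiE: "\<And>x. x \<in> hsurf f \<Longrightarrow> \<Phi> x = (h (fst x), snd x * r (fst x))" by (simp add: \<Phi>_def)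
  have hm1: "holo_map S \<Phi>" unfolding S_def
    by (rule holo_map_affine[OF holf simf holh holr PhiE])
  have hB: "(\<lambda>z. 1 / r (inv h z)) holomorphic_on UNIV"
    using holomorphic_on_compose_gen[OF holi holr] rnz
    by (intro holomorphic_on_divide) (auto simp: o_def)
  have PsiE: "\<And>x. x \<in> hsurf g \<Longrightarrow> the_inv_into S \<Phi> x = (inv h (fst x), snd x * (1 / r (inv h (fst x))))"
    by (simp add: invPhi T_def \<Psi>_def)
  have hm2: "holo_map T (the_inv_into S \<Phi>)" unfolding T_def
    by (rule holo_map_affine[OF holg simg holi hB PsiE])
  have bh: "biholomorphism S T \<Phi>" using bij hm1 hm2 by (simp add: biholomorphism_def)
  define sf where "sf = restrict (\<lambda>(z::complex, w::complex). (z, - w)) S"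
  define sg where "sg = restrict (\<lambda>(z::complex, w::complex). (z, - w)) T"
  have e1: "restrict (\<Phi> \<circ> restrict id S \<circ> the_inv_into S \<Phi>) T = restrict id T"
  proof
    fix p show "restrict (\<Phi> \<circ> restrict id S \<circ> the_inv_into S \<Phi>) T p = restrict id T p"
      using invPhi PsiT PhiPsi by (cases "p \<in> T") auto
  qed
  have e2: "restrict (\<Phi> \<circ> sf \<circ> the_inv_into S \<Phi>) T = sg"
  proof
    fix p show "restrict (\<Phi> \<circ> sf \<circ> the_inv_into S \<Phi>) T p = sg p"
    proof (cases "p \<in> T")
      case True
      obtain z w where p: "p = (z, w)" by fastforce
      have "\<Psi> p \<in> S" using PsiT True by blast
      then show ?thesis using True invPhi[OF True] rnz
        by (simp add: sf_def sg_def p \<Psi>_def \<Phi>_def hi split: prod.splits)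
    next
      case False
      then show ?thesis by (simp add: sg_def)
    qed
  qed
  have "{restrict (\<Phi> \<circ> k \<circ> the_inv_into S \<Phi>) T | k. k \<in> deck_group f} = deck_group g"
  proof -
    have "{restrict (\<Phi> \<circ> k \<circ> the_inv_into S \<Phi>) T | k. k \<in> deck_group f}
        = {restrict (\<Phi> \<circ> restrict id S \<circ> the_inv_into S \<Phi>) T, restrict (\<Phi> \<circ> sf \<circ> the_inv_into S \<Phi>) T}"
      unfolding deck_group_def S_def sf_def by blast
    also have "\<dots> = deck_group g" unfolding e1 e2 by (simp add: deck_group_def T_def sg_def)
    finally show ?thesis .
  qed
  then show ?thesis using bh unfolding biholo_equiv_pairs_def S_def T_def by blast
qed

lemma hsurf_neg: "q \<in> hsurf F \<Longrightarrow> (fst q, - snd q) \<in> hsurf F"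
  by (auto simp: hsurf_def)

lemma deck_comm:
  assumes bij: "bij_betw \<Phi> (hsurf f) (hsurf g)"
    and deq: "{restrict (\<Phi> \<circ> h \<circ> the_inv_into (hsurf f) \<Phi>) (hsurf g) | h. h \<in> deck_group f} = deck_group g"
    and gx0: "g x0 \<noteq> 0"
    and q: "q \<in> hsurf f"
  shows "\<Phi> (fst q, - snd q) = (fst (\<Phi> q), - snd (\<Phi> q))"
proof -
  define S where "S = hsurf f"
  define T where "T = hsurf g"
  define sf where "sf = restrict (\<lambda>(z::complex, w::complex). (z, - w)) S"
  define sg where "sg = restrict (\<lambda>(z::complex, w::complex). (z, - w)) T"
  define \<Psi> where "\<Psi> = the_inv_into S \<Phi>"
  have bij': "bij_betw \<Phi> S T" using bij by (simp add: S_def T_def)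
  have PsiT: "\<Psi> p \<in> S" if "p \<in> T" for p
    using bij' that unfolding \<Psi>_def by (metis bij_betw_def the_inv_into_into order_refl)
  have PhiPsi: "\<Phi> (\<Psi> p) = p" if "p \<in> T" for p
    using bij' that unfolding \<Psi>_def by (meson f_the_inv_into_f_bij_betw)
  have e1: "restrict (\<Phi> \<circ> restrict id S \<circ> \<Psi>) T = restrict id T"
  proof
    fix p show "restrict (\<Phi> \<circ> restrict id S \<circ> \<Psi>) T p = restrict id T p"
      using PsiT PhiPsi by (cases "p \<in> T") auto
  qed
  have X: "{restrict (\<Phi> \<circ> k \<circ> \<Psi>) T | k. k \<in> deck_group f}
        = {restrict (\<Phi> \<circ> restrict id S \<circ> \<Psi>) T, restrict (\<Phi> \<circ> sf \<circ> \<Psi>) T}"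
    unfolding deck_group_def S_def sf_def by blast
  have d: "{restrict (\<Phi> \<circ> k \<circ> \<Psi>) T | k. k \<in> deck_group f} = deck_group g"
    using deq by (simp only: \<Psi>_def S_def T_def)
  have dg: "deck_group g = {restrict id T, sg}" by (simp only: deck_group_def T_def sg_def)
  have st: "{restrict id T, restrict (\<Phi> \<circ> sf \<circ> \<Psi>) T} = {restrict id T, sg}"
    using X[unfolded e1] d dg by simp
  have p0: "(x0, csqrt (g x0)) \<in> T" by (simp add: T_def hsurf_def)
  have "csqrt (g x0) \<noteq> 0" using gx0 by auto
  then have "sg (x0, csqrt (g x0)) \<noteq> restrict id T (x0, csqrt (g x0))"
    using p0 by (simp add: sg_def)
  then have "sg \<noteq> restrict id T" by metis
  then have nid: "sg \<noteq> restrict id T" .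
  have B: "restrict (\<Phi> \<circ> sf \<circ> \<Psi>) T = sg"
  proof (rule ccontr)
    assume ne: "restrict (\<Phi> \<circ> sf \<circ> \<Psi>) T \<noteq> sg"
    have "restrict (\<Phi> \<circ> sf \<circ> \<Psi>) T \<in> {restrict id T, sg}" using st by blast
    then have "restrict (\<Phi> \<circ> sf \<circ> \<Psi>) T = restrict id T" using ne by blast
    then have "{restrict id T, sg} = {restrict id T}" using st by simp
    then have "sg \<in> {restrict id T}" by blast
    then show False using nid by blast
  qed
  have qS: "q \<in> S" using q by (simp add: S_def)
  have PhiT: "\<Phi> q \<in> T" by (rule bij_betw_apply[OF bij' qS])
  have "\<Psi> (\<Phi> q) = q" unfolding \<Psi>_def using bij' qS by (meson bij_betw_imp_inj_on the_inv_into_f_f)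
  then have "restrict (\<Phi> \<circ> sf \<circ> \<Psi>) T (\<Phi> q) = \<Phi> (fst q, - snd q)"
    using PhiT qS by (simp add: sf_def split: prod.splits)
  moreover have "sg (\<Phi> q) = (fst (\<Phi> q), - snd (\<Phi> q))"
    using PhiT by (simp add: sg_def split: prod.splits)
  ultimately show ?thesis using B by simp
qed

lemma psi_cont:
  fixes f :: "complex \<Rightarrow> complex" and \<psi> :: "complex \<Rightarrow> complex"
  assumes holf: "f holomorphic_on UNIV" and hm: "holo_map (hsurf f) \<Phi>"
    and fstP: "\<And>z w. w ^ 2 = f z \<Longrightarrow> fst (\<Phi> (z, w)) = \<psi> z"
  shows "isCont \<psi> z0"
proof -
  define w0 where "w0 = csqrt (f z0)"
  define l where "l = (\<lambda>z. if norm (csqrt (f z) - w0) \<le> norm (csqrt (f z) + w0) then csqrt (f z) else - csqrt (f z))"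
  have l2: "l z ^ 2 = f z" for z by (simp add: l_def)
  have lle: "norm (l z - w0) \<le> norm (l z + w0)" for z
  proof (cases "norm (csqrt (f z) - w0) \<le> norm (csqrt (f z) + w0)")
    case True then show ?thesis by (simp add: l_def)
  next
    case False
    define c where "c = csqrt (f z)"
    have e1: "- c - w0 = - (c + w0)" by simp
    have e2: "- c + w0 = - (c - w0)" by simp
    have n1: "norm (- c - w0) = norm (c + w0)" unfolding e1 by (rule norm_minus_cancel)
    have n2: "norm (- c + w0) = norm (c - w0)" unfolding e2 by (rule norm_minus_cancel)
    have lz: "l z = - c" using False by (simp add: l_def c_def)
    show ?thesis unfolding lz n1 n2 using False by (simp add: c_def)
  qed
  have lb: "norm (l z - w0) \<le> sqrt (norm (f z - f z0))" for z
  proof (rule real_le_rsqrt)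
    have "norm (l z - w0) ^ 2 = norm (l z - w0) * norm (l z - w0)" by (simp add: power2_eq_square)
    also have "\<dots> \<le> norm (l z - w0) * norm (l z + w0)" using lle by (simp add: mult_left_mono)
    also have "\<dots> = norm ((l z - w0) * (l z + w0))" by (simp add: norm_mult)
    also have "(l z - w0) * (l z + w0) = l z ^ 2 - w0 ^ 2" by (simp add: algebra_simps power2_eq_square)
    also have "\<dots> = f z - f z0" by (simp add: l2 w0_def)
    finally show "norm (l z - w0) ^ 2 \<le> norm (f z - f z0)" .
  qed
  have cf: "isCont f z0"
    using continuous_on_eq_continuous_at[OF open_UNIV, of f] holomorphic_on_imp_continuous_on[OF holf] by blast
  then have "((\<lambda>z. f z - f z0) \<longlongrightarrow> 0) (at z0)"
    by (simp add: isCont_def LIM_zero)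
  then have "((\<lambda>z. sqrt (norm (f z - f z0))) \<longlongrightarrow> 0) (at z0)"
    using tendsto_real_sqrt[OF tendsto_norm_zero] by fastforce
  then have "((\<lambda>z. l z - w0) \<longlongrightarrow> 0) (at z0)"
    by (rule Lim_null_comparison[rotated]) (simp add: lb)
  then have ll: "(l \<longlongrightarrow> w0) (at z0)" by (rule LIM_zero_cancel)
  have u: "((\<lambda>z. (z, l z)) \<longlongrightarrow> (z0, w0)) (at z0)"
    by (intro tendsto_Pair ll tendsto_ident_at)
  have p: "(z0, w0) \<in> hsurf f" by (simp add: hsurf_def w0_def)
  have ev: "eventually (\<lambda>z. (z, l z) \<in> hsurf f) (at z0)" by (simp add: hsurf_def l2)
  have "((\<lambda>z. \<Phi> (z, l z)) \<longlongrightarrow> \<Phi> (z0, w0)) (at z0)"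
    by (rule holo_map_tendsto[OF hm p u ev])
  then have "((\<lambda>z. fst (\<Phi> (z, l z))) \<longlongrightarrow> fst (\<Phi> (z0, w0))) (at z0)"
    by (rule tendsto_fst)
  moreover have "fst (\<Phi> (z, l z)) = \<psi> z" for z using fstP l2 by simp
  moreover have "fst (\<Phi> (z0, w0)) = \<psi> z0" using fstP by (simp add: w0_def)
  ultimately show ?thesis by (simp add: isCont_def)
qed

lemma psi_holo_regular:
  fixes f :: "complex \<Rightarrow> complex" and \<psi> :: "complex \<Rightarrow> complex"
  assumes holf: "f holomorphic_on UNIV" and hm: "holo_map (hsurf f) \<Phi>"
    and fstP: "\<And>z w. w ^ 2 = f z \<Longrightarrow> fst (\<Phi> (z, w)) = \<psi> z"
    and fz0: "f z0 \<noteq> 0"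
  shows "\<exists>U. open U \<and> z0 \<in> U \<and> \<psi> holomorphic_on U"
proof -
  define c0 where "c0 = csqrt (f z0)"
  have c0nz: "c0 \<noteq> 0" using fz0 by (simp add: c0_def)
  have pS: "(z0, c0) \<in> hsurf f" by (simp add: hsurf_def c0_def)
  obtain V \<gamma> where ch: "local_chart (hsurf f) (z0, c0) V \<gamma>"
    and h1: "(\<lambda>t. fst (\<Phi> (\<gamma> t))) holomorphic_on V"
    using hm pS unfolding holo_map_def by blast
  note cp = chart_props[OF ch pS]
  define a where "a = (\<lambda>t. fst (\<gamma> t))"
  define b where "b = (\<lambda>t. snd (\<gamma> t))"
  have ha: "a holomorphic_on V" using cp(2) by (simp add: a_def)
  have hb: "b holomorphic_on V" using cp(3) by (simp add: b_def)
  have imm: "deriv a t \<noteq> 0 \<or> deriv b t \<noteq> 0" if "t \<in> V" for t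
  proof -
    have "\<forall>t\<in>V. deriv (\<lambda>s. fst (\<gamma> s)) t \<noteq> 0 \<or> deriv (\<lambda>s. snd (\<gamma> s)) t \<noteq> 0"
      using ch unfolding local_chart_def by (elim conjE)
    then show ?thesis using that unfolding a_def b_def by blast
  qed
  have gab: "\<gamma> t = (a t, b t)" for t by (simp add: a_def b_def)
  have bsq: "b t * b t = f (a t)" if tV: "t \<in> V" for t
  proof -
    have "(a t, b t) \<in> hsurf f" using cp(4)[OF tV] unfolding gab .
    then have "b t ^ 2 = f (a t)" by (simp add: hsurf_def)
    then show ?thesis by (simp add: power2_eq_square)
  qed
  obtain t0 where t0: "t0 \<in> V" "\<gamma> t0 = (z0, c0)" using cp(5) by (auto simp del: gab)
  have at0: "a t0 = z0" and bt0: "b t0 = c0" using t0 by (simp_all add: gab)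
  have da0: "deriv a t0 \<noteq> 0"
  proof
    assume da: "deriv a t0 = 0"
    have Da: "(a has_field_derivative deriv a t0) (at t0)" using holomorphic_derivI[OF ha cp(1) t0(1)] .
    have Db: "(b has_field_derivative deriv b t0) (at t0)" using holomorphic_derivI[OF hb cp(1) t0(1)] .
    have Df: "(f has_field_derivative deriv f (a t0)) (at (a t0))" using holomorphic_derivI[OF holf open_UNIV] by blast
    have D1: "((\<lambda>t. b t * b t) has_field_derivative deriv b t0 * b t0 + deriv b t0 * b t0) (at t0)"
      by (rule DERIV_mult[OF Db Db])
    have D2: "((\<lambda>t. f (a t)) has_field_derivative deriv f (a t0) * deriv a t0) (at t0)"
      by (rule DERIV_chain2[OF Df Da])
    have D2': "((\<lambda>t. b t * b t) has_field_derivative deriv f (a t0) * deriv a t0) (at t0)"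
      by (rule has_field_derivative_transform_within_open[OF D2 cp(1) t0(1)]) (simp add: bsq)
    have "deriv b t0 * b t0 + deriv b t0 * b t0 = deriv f (a t0) * deriv a t0"
      using DERIV_unique[OF D1 D2'] .
    then have "2 * (b t0 * deriv b t0) = 0" using da by (simp add: algebra_simps)
    then have "deriv b t0 = 0" using c0nz bt0 by simp
    then show False using imm[OF t0(1)] da by simp
  qed
  obtain r where r: "r > 0" "ball t0 r \<subseteq> V" "inj_on a (ball t0 r)"
    using has_complex_derivative_locally_injective[OF ha t0(1) cp(1) da0] by blast
  define B where "B = ball t0 r"
  have haB: "a holomorphic_on B" using holomorphic_on_subset[OF ha r(2)] by (simp add: B_def)
  have injB: "inj_on a B" using r(3) by (simp add: B_def)
  have oO: "open (a ` B)" using open_mapping_thm3[OF haB _ injB] by (simp add: B_def)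
  obtain ai where ai: "ai holomorphic_on (a ` B)" "\<And>t. t \<in> B \<Longrightarrow> ai (a t) = t"
    using holomorphic_has_inverse[OF haB _ injB] by (metis B_def open_ball)
  have "t0 \<in> B" using r(1) by (simp add: B_def)
  then have z0O: "z0 \<in> a ` B" using at0 by (metis imageI)
  have aiB: "ai ` (a ` B) \<subseteq> V" using ai(2) r(2) by (auto simp: B_def)
  have hc: "((\<lambda>t. fst (\<Phi> (\<gamma> t))) \<circ> ai) holomorphic_on (a ` B)"
    by (rule holomorphic_on_compose_gen[OF ai(1) h1 aiB])
  have "\<psi> holomorphic_on (a ` B)"
  proof (rule holomorphic_transform[OF hc])
    fix y assume "y \<in> a ` B"
    then obtain t where t: "t \<in> B" "y = a t" by blast
    have tV: "t \<in> V" using t(1) r(2) by (auto simp: B_def)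
    have "b t ^ 2 = f (a t)" using bsq[OF tV] by (simp add: power2_eq_square)
    then have "fst (\<Phi> (a t, b t)) = \<psi> (a t)" by (rule fstP)
    then show "((\<lambda>t. fst (\<Phi> (\<gamma> t))) \<circ> ai) y = \<psi> y" using t ai(2) by (simp add: gab)
  qed
  then show ?thesis using oO z0O by blast
qed

lemma psi_holo:
  fixes f :: "complex \<Rightarrow> complex" and \<psi> :: "complex \<Rightarrow> complex"
  assumes holf: "f holomorphic_on UNIV" and simf: "\<And>z. f z = 0 \<Longrightarrow> deriv f z \<noteq> 0"
    and hm: "holo_map (hsurf f) \<Phi>"
    and fstP: "\<And>z w. w ^ 2 = f z \<Longrightarrow> fst (\<Phi> (z, w)) = \<psi> z"
  shows "\<psi> holomorphic_on UNIV"
proof (rule holo_UNIV_local)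
  fix z0
  show "\<exists>S. open S \<and> z0 \<in> S \<and> \<psi> holomorphic_on S"
  proof (cases "f z0 = 0")
    case False
    then show ?thesis using psi_holo_regular[OF holf hm fstP] by blast
  next
    case True
    obtain r where r: "r > 0" "\<And>y. y \<in> ball z0 r \<Longrightarrow> y \<noteq> z0 \<Longrightarrow> f y \<noteq> 0"
      using simple_zero_isolated[OF holf True simf[OF True]] by blast
    have cont: "continuous_on (ball z0 r) \<psi>"
      by (rule continuous_at_imp_continuous_on) (use psi_cont[OF holf hm fstP] in blast)
    have "\<psi> holomorphic_on (ball z0 r - {z0})"
      unfolding holomorphic_on_def
    proof
      fix y assume y: "y \<in> ball z0 r - {z0}"
      then have "f y \<noteq> 0" using r(2) by blast
      then obtain U where "open U" "y \<in> U" "\<psi> holomorphic_on U"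
        using psi_holo_regular[OF holf hm fstP] by blast
      then have "\<psi> field_differentiable at y" using holomorphic_on_imp_differentiable_at by blast
      then show "\<psi> field_differentiable at y within (ball z0 r - {z0})" by (rule field_differentiable_at_within)
    qed
    then have "\<psi> holomorphic_on ball z0 r"
      by (rule no_isolated_singularity[OF cont _ open_ball, of "{z0}"]) simp
    moreover have "open (ball z0 r)" "z0 \<in> ball z0 r" using r by auto
    ultimately show ?thesis by blast
  qed
qed

lemma sq_eq_cases: "(w::complex) ^ 2 = c ^ 2 \<Longrightarrow> w = c \<or> w = - c"
  by (simp add: power2_eq_iff)

lemma forward_main:
  fixes f g :: "complex \<Rightarrow> complex"
  assumes holf: "f holomorphic_on UNIV" and simf: "\<And>z. f z = 0 \<Longrightarrow> deriv f z \<noteq> 0"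
    and bij: "bij_betw \<Phi> (hsurf f) (hsurf g)" and hm: "holo_map (hsurf f) \<Phi>"
    and comm: "\<And>q. q \<in> hsurf f \<Longrightarrow> \<Phi> (fst q, - snd q) = (fst (\<Phi> q), - snd (\<Phi> q))"
  shows "\<exists>h. h holomorphic_on UNIV \<and> bij h \<and> inv h holomorphic_on UNIV \<and> h ` {x. f x = 0} = {x. g x = 0}"
proof -
  define S where "S = hsurf f"
  define T where "T = hsurf g"
  have bij': "bij_betw \<Phi> S T" using bij by (simp add: S_def T_def)
  have injP: "inj_on \<Phi> S" by (rule bij_betw_imp_inj_on[OF bij'])
  have PhiT: "\<Phi> q \<in> T" if "q \<in> S" for q by (rule bij_betw_apply[OF bij' that])
  have imP: "\<Phi> ` S = T" by (rule bij_betw_imp_surj_on[OF bij'])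
  have inS: "(z, w) \<in> S \<longleftrightarrow> w ^ 2 = f z" for z w by (simp add: S_def hsurf_def)
  have inT: "(z, w) \<in> T \<longleftrightarrow> w ^ 2 = g z" for z w by (simp add: T_def hsurf_def)
  have comm': "\<Phi> (z, - w) = (fst (\<Phi> (z, w)), - snd (\<Phi> (z, w)))" if "(z, w) \<in> S" for z w
    using comm[of "(z, w)"] that by (simp add: S_def)
  define \<psi> where "\<psi> = (\<lambda>z. fst (\<Phi> (z, csqrt (f z))))"
  have cS: "(z, csqrt (f z)) \<in> S" for z by (simp add: inS)
  have fstP: "fst (\<Phi> (z, w)) = \<psi> z" if "(z, w) \<in> S" for z w
  proof -
    have "w ^ 2 = csqrt (f z) ^ 2" using that by (simp add: inS)
    then have "w = csqrt (f z) \<or> w = - csqrt (f z)" by (rule sq_eq_cases)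
    then show ?thesis
    proof
      assume "w = csqrt (f z)" then show ?thesis by (simp add: \<psi>_def)
    next
      assume "w = - csqrt (f z)" then show ?thesis using comm'[OF cS[of z]] by (simp add: \<psi>_def)
    qed
  qed
  have injpsi: "inj \<psi>"
  proof (rule injI)
    fix z1 z2 assume eq: "\<psi> z1 = \<psi> z2"
    define q1 where "q1 = (z1, csqrt (f z1))"
    define q2 where "q2 = (z2, csqrt (f z2))"
    have q1S: "q1 \<in> S" and q2S: "q2 \<in> S" by (simp_all add: q1_def q2_def cS)
    obtain a1 b1 where ab1: "\<Phi> q1 = (a1, b1)" by fastforce
    obtain a2 b2 where ab2: "\<Phi> q2 = (a2, b2)" by fastforce
    have a12: "a1 = a2" using eq ab1 ab2 by (simp add: \<psi>_def q1_def q2_def)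
    have "b1 ^ 2 = g a1" using PhiT[OF q1S] ab1 by (simp add: inT)
    moreover have "b2 ^ 2 = g a1" using PhiT[OF q2S] ab2 a12 by (simp add: inT)
    ultimately have "b2 ^ 2 = b1 ^ 2" by simp
    then have "b2 = b1 \<or> b2 = - b1" by (rule sq_eq_cases)
    then show "z1 = z2"
    proof
      assume "b2 = b1"
      then have "\<Phi> q2 = \<Phi> q1" using ab1 ab2 a12 by simp
      then have "q2 = q1" using injP q1S q2S by (meson inj_onD)
      then show ?thesis by (simp add: q1_def q2_def)
    next
      assume "b2 = - b1"
      have nS: "(z1, - csqrt (f z1)) \<in> S" by (simp add: inS)
      have "\<Phi> (z1, - csqrt (f z1)) = (a1, - b1)" using comm'[OF cS[of z1]] ab1 by (simp add: q1_def)
      then have "\<Phi> q2 = \<Phi> (z1, - csqrt (f z1))" using ab2 a12 \<open>b2 = - b1\<close> by simp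
      then have "q2 = (z1, - csqrt (f z1))" using injP q2S nS by (meson inj_onD)
      then show ?thesis by (simp add: q2_def)
    qed
  qed
  have surjpsi: "surj \<psi>"
  proof -
    have "y \<in> range \<psi>" for y
    proof -
      have "(y, csqrt (g y)) \<in> T" by (simp add: inT)
      then obtain q where qS: "q \<in> S" and qe: "\<Phi> q = (y, csqrt (g y))" using imP by (metis imageE)
      obtain z w where qzw: "q = (z, w)" by fastforce
      have "\<psi> z = y" using fstP[of z w] qS qe qzw by simp
      then show ?thesis by blast
    qed
    then show ?thesis by blast
  qed
  have zero1: "g (\<psi> z) = 0" if "f z = 0" for z
  proof -
    have zS: "(z, 0) \<in> S" using that by (simp add: inS)
    obtain a b where ab: "\<Phi> (z, 0) = (a, b)" by fastforce
    have "\<Phi> (z, 0) = (a, - b)" using comm'[OF zS] ab by simp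
    then have "b = 0" using ab by simp
    moreover have "b ^ 2 = g a" using PhiT[OF zS] ab by (simp add: inT)
    moreover have "a = \<psi> z" using fstP[OF zS] ab by simp
    ultimately show ?thesis by simp
  qed
  have zero2: "f z = 0" if "g (\<psi> z) = 0" for z
  proof -
    define c where "c = csqrt (f z)"
    have cS': "(z, c) \<in> S" by (simp add: c_def cS)
    obtain a b where ab: "\<Phi> (z, c) = (a, b)" by fastforce
    have "a = \<psi> z" using fstP[OF cS'] ab by simp
    moreover have "b ^ 2 = g a" using PhiT[OF cS'] ab by (simp add: inT)
    ultimately have "b = 0" using that by simp
    then have "\<Phi> (z, - c) = \<Phi> (z, c)" using comm'[OF cS'] ab by simp
    moreover have "(z, - c) \<in> S" using cS' by (simp add: inS)
    ultimately have "(z, - c) = (z, c)" using injP cS' by (meson inj_onD)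
    then have "c = 0" by simp
    then show ?thesis by (simp add: c_def)
  qed
  have zeros: "\<psi> ` {x. f x = 0} = {x. g x = 0}"
  proof
    show "\<psi> ` {x. f x = 0} \<subseteq> {x. g x = 0}" using zero1 by blast
    show "{x. g x = 0} \<subseteq> \<psi> ` {x. f x = 0}"
    proof
      fix y assume "y \<in> {x. g x = 0}"
      moreover obtain z where "y = \<psi> z" using surjpsi by blast
      ultimately show "y \<in> \<psi> ` {x. f x = 0}" using zero2 by blast
    qed
  qed
  have fstP': "fst (\<Phi> (z, w)) = \<psi> z" if "w ^ 2 = f z" for z w
  proof -
    have "(z, w) \<in> S" using that by (simp add: inS)
    then show ?thesis by (rule fstP)
  qed
  have holpsi: "\<psi> holomorphic_on UNIV" by (rule psi_holo[OF holf simf hm fstP'])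
  have injU: "inj_on \<psi> UNIV" using injpsi by simp
  obtain k where k: "k holomorphic_on (\<psi> ` UNIV)" "\<And>z. z \<in> UNIV \<Longrightarrow> k (\<psi> z) = z"
  proof (rule holomorphic_has_inverse[OF holpsi open_UNIV injU])
    fix g assume "g holomorphic_on (\<psi> ` UNIV)" "\<And>z. z \<in> UNIV \<Longrightarrow> deriv \<psi> z * deriv g (\<psi> z) = 1"
      "\<And>z. z \<in> UNIV \<Longrightarrow> g (\<psi> z) = z"
    then show thesis using that by blast
  qed
  have rng: "\<psi> ` UNIV = UNIV" using surjpsi by simp
  have kh: "k holomorphic_on UNIV" using k(1) rng by simp
  have invh: "inv \<psi> holomorphic_on UNIV"
  proof (rule holomorphic_transform[OF kh])
    fix y :: complex
    obtain x where "y = \<psi> x" using surjpsi by blast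
    then show "k y = inv \<psi> y" using k(2) inv_f_f[OF injpsi] by simp
  qed
  have "bij \<psi>" using injpsi surjpsi by (simp add: bij_def)
  then show ?thesis using holpsi invh zeros by blast
qed

theorem mainTheorem7:
  fixes z z' :: "nat \<Rightarrow> complex" and f g :: "complex \<Rightarrow> complex"
  assumes "inj z" and "inj z'"
    and "filterlim (\<lambda>k. norm (z k)) at_top sequentially"
    and "filterlim (\<lambda>k. norm (z' k)) at_top sequentially"
    and "f holomorphic_on UNIV" and "g holomorphic_on UNIV"
    and "{x. f x = 0} = range z" and "{x. g x = 0} = range z'"
    and "\<forall>k. deriv f (z k) \<noteq> 0" and "\<forall>k. deriv g (z' k) \<noteq> 0"
  shows "biholo_equiv_pairs f g \<longleftrightarrow>
    (\<exists>h. h holomorphic_on UNIV \<and> bij h \<and> inv h holomorphic_on UNIV \<and>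
         h ` {x. f x = 0} = {x. g x = 0})"
proof -
  have holf: "f holomorphic_on UNIV" by (rule assms(5))
  have holg: "g holomorphic_on UNIV" by (rule assms(6))
  have simf: "deriv f x \<noteq> 0" if "f x = 0" for x
  proof -
    have "x \<in> {x. f x = 0}" using that by simp
    then have "x \<in> range z" unfolding assms(7) .
    then obtain k where "x = z k" by blast
    then show ?thesis using assms(9) by simp
  qed
  have simg: "deriv g x \<noteq> 0" if "g x = 0" for x
  proof -
    have "x \<in> {x. g x = 0}" using that by simp
    then have "x \<in> range z'" unfolding assms(8) .
    then obtain k where "x = z' k" by blast
    then show ?thesis using assms(10) by simp
  qed
  show ?thesis
  proof
    assume "biholo_equiv_pairs f g"
    then have "\<exists>\<Phi>. biholomorphism (hsurf f) (hsurf g) \<Phi> \<and>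
        {restrict (\<Phi> \<circ> h \<circ> the_inv_into (hsurf f) \<Phi>) (hsurf g) | h. h \<in> deck_group f} = deck_group g"
      unfolding biholo_equiv_pairs_def .
    then obtain \<Phi> where bh: "biholomorphism (hsurf f) (hsurf g) \<Phi>"
      and deq: "{restrict (\<Phi> \<circ> h \<circ> the_inv_into (hsurf f) \<Phi>) (hsurf g) | h. h \<in> deck_group f} = deck_group g"
      by (elim exE conjE)
    have bhc: "bij_betw \<Phi> (hsurf f) (hsurf g) \<and> holo_map (hsurf f) \<Phi> \<and> holo_map (hsurf g) (the_inv_into (hsurf f) \<Phi>)"
      using bh unfolding biholomorphism_def .
    have bij: "bij_betw \<Phi> (hsurf f) (hsurf g)" using bhc by (rule conjunct1)
    have hm: "holo_map (hsurf f) \<Phi>" using bhc by (elim conjE)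
    have "\<exists>x0. g x0 \<noteq> 0"
    proof (rule ccontr)
      assume "\<not> (\<exists>x0. g x0 \<noteq> 0)"
      then have "\<forall>x. g x = 0" by simp
      then have "g = (\<lambda>_. 0)" by (simp add: fun_eq_iff)
      then have "deriv g (z' 0) = 0" by simp
      then show False using assms(10) by blast
    qed
    then obtain x0 where gx0: "g x0 \<noteq> 0" by blast
    have comm: "\<Phi> (fst q, - snd q) = (fst (\<Phi> q), - snd (\<Phi> q))" if "q \<in> hsurf f" for q
      by (rule deck_comm[OF bij deq gx0 that])
    note fm = forward_main[OF holf simf bij hm]
    show "\<exists>h. h holomorphic_on UNIV \<and> bij h \<and> inv h holomorphic_on UNIV \<and> h ` {x. f x = 0} = {x. g x = 0}"
    proof (rule fm)
      fix q assume "q \<in> hsurf f"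
      then show "\<Phi> (fst q, - snd q) = (fst (\<Phi> q), - snd (\<Phi> q))" by (rule comm)
    qed
  next
    assume "\<exists>h. h holomorphic_on UNIV \<and> bij h \<and> inv h holomorphic_on UNIV \<and> h ` {x. f x = 0} = {x. g x = 0}"
    then obtain h where h1: "h holomorphic_on UNIV" and h2: "bij h" and h3: "inv h holomorphic_on UNIV"
      and h4: "h ` {x. f x = 0} = {x. g x = 0}"
      by blast
    show "biholo_equiv_pairs f g" by (rule backward[OF holf holg simf simg h1 h2 h3 h4])
  qed
qed

end
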